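(* Let $X$ be a uniformly convex, uniformly smooth real Banach space. Every closed convex cone $K\subseteq X$ has a convex polar $K^\circ$ if and only if every wedge $W(a,b)$ ($a,b\in S^*$, $b\notin\{a,-a\}$) has a convex polar.
   Context: $X^*$ is the norm dual of $X$ with pairing $\langle\cdot,\cdot\rangle$ and $S^*=\{c\in X^*:\|c\|_{X^*}=1\}$. For $a,b\in S^*$, $b\notin\{a,-a\}$, $\delta(a,b)=\{(\lambda a+\mu b)/\|\lambda a+\mu b\|_{X^*}:\lambda,\mu\ge0,(\lambda,\mu)\ne(0,0)\}$, and the wedge is $W(a,b)=\{x\in X:\langle c,x\rangle\le 0\ \forall c\in\delta(a,b)\}$. For a closed convex cone $K$, the metric projection is $P_Kx=\operatorname{argmin}\{\|x-k\|:k\in K\}$ (well defined and single valued here) and the polar is $K^\circ=\{x\in X:P_Kx=0\}$. *)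

theory Defs
  imports "HOL-Analysis.Analysis"
begin

text \<open>The norm dual X* of X is rendered as the space of bounded linear functionals
  bounded linear functionals with the operator norm; the pairing is blinfun_apply.\<close>

definition uniformly_convex :: "'a::real_normed_vector set \<Rightarrow> bool" where
  "uniformly_convex (U::'a set) \<longleftrightarrow> (\<forall>\<epsilon>>0. \<exists>\<delta>>0. \<forall>x y::'a.
     norm x \<le> 1 \<and> norm y \<le> 1 \<and> norm (x - y) \<ge> \<epsilon> \<longrightarrow> norm ((1/2) *\<^sub>R (x + y)) \<le> 1 - \<delta>)"

definition uniformly_smooth :: "'a::real_normed_vector set \<Rightarrow> bool" where
  "uniformly_smooth (U::'a set) \<longleftrightarrow> (\<forall>\<epsilon>>0. \<exists>\<delta>>0. \<forall>t. 0 < t \<and> t < \<delta> \<longrightarrow>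
     (\<forall>x y::'a. norm x = 1 \<and> norm y = 1 \<longrightarrow>
        (norm (x + t *\<^sub>R y) + norm (x - t *\<^sub>R y)) / 2 - 1 \<le> \<epsilon> * t))"

definition metric_proj :: "'a::real_normed_vector set \<Rightarrow> 'a \<Rightarrow> 'a set" where
  "metric_proj K x = {k \<in> K. \<forall>k'\<in>K. norm (x - k) \<le> norm (x - k')}"

definition polar_cone :: "'a::real_normed_vector set \<Rightarrow> 'a set" where
  "polar_cone K = {x. metric_proj K x = {0}}"

definition dual_dir :: "('a::real_normed_vector \<Rightarrow>\<^sub>L real) \<Rightarrow> ('a \<Rightarrow>\<^sub>L real) \<Rightarrow> ('a \<Rightarrow>\<^sub>L real) set" where
  "dual_dir a b = {(1 / norm (l *\<^sub>R a + m *\<^sub>R b)) *\<^sub>R (l *\<^sub>R a + m *\<^sub>R b) | l m.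
      l \<ge> 0 \<and> m \<ge> 0 \<and> (l, m) \<noteq> (0, 0)}"

definition wedge :: "('a::real_normed_vector \<Rightarrow>\<^sub>L real) \<Rightarrow> ('a \<Rightarrow>\<^sub>L real) \<Rightarrow> 'a set" where
  "wedge a b = {x. \<forall>c\<in>dual_dir a b. blinfun_apply c x \<le> 0}"

end

theory Submission
  imports Defs
begin

definition dq :: "'a::real_normed_vector \<Rightarrow> 'a \<Rightarrow> real \<Rightarrow> real" where
  "dq x h t = (norm (x + t *\<^sub>R h) - norm x) / t"

definition gd :: "'a::real_normed_vector \<Rightarrow> 'a \<Rightarrow> real" where
  "gd x h = Inf (dq x h ` {0<..})"

lemma dq_mono:
  assumes "0 < s" "s \<le> t" shows "dq x h s \<le> dq x h t"
proof -
  have t: "t > 0" using assms by simp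
  have eq: "x + s *\<^sub>R h = (1 - s/t) *\<^sub>R x + (s/t) *\<^sub>R (x + t *\<^sub>R h)"
    using t by (simp add: algebra_simps)
  have c1: "0 \<le> 1 - s/t" using assms t by (simp add: field_simps)
  have c2: "0 \<le> s/t" using assms t by simp
  have "norm (x + s *\<^sub>R h) \<le> norm ((1 - s/t) *\<^sub>R x) + norm ((s/t) *\<^sub>R (x + t *\<^sub>R h))"
    unfolding eq by (rule norm_triangle_ineq)
  also have "\<dots> = (1 - s/t) * norm x + (s/t) * norm (x + t *\<^sub>R h)"
    using c1 c2 assms t by (simp add: abs_of_pos)
  finally have "norm (x + s *\<^sub>R h) - norm x \<le> (s/t) * (norm (x + t *\<^sub>R h) - norm x)"
    by (simp add: algebra_simps)
  then have "(norm (x + s *\<^sub>R h) - norm x) / s \<le> ((s/t) * (norm (x + t *\<^sub>R h) - norm x)) / s"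
    using assms by (intro divide_right_mono) auto
  also have "\<dots> = (norm (x + t *\<^sub>R h) - norm x) / t" using assms t by (simp add: field_simps)
  finally show ?thesis unfolding dq_def .
qed

lemma dq_bound:
  assumes "0 < t" shows "\<bar>dq x h t\<bar> \<le> norm h"
proof -
  have "\<bar>norm (x + t *\<^sub>R h) - norm x\<bar> \<le> norm ((x + t *\<^sub>R h) - x)"
    by (rule norm_triangle_ineq3)
  also have "\<dots> = norm h * t" using assms by simp
  finally have "\<bar>norm (x + t *\<^sub>R h) - norm x\<bar> \<le> norm h * t" .
  then show ?thesis
    unfolding dq_def abs_div_pos[OF assms, symmetric] pos_divide_le_eq[OF assms] .
qed

lemma dq_lb: "0 < t \<Longrightarrow> - norm h \<le> dq x h t"
  using dq_bound[of t x h] by linarith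

lemma dq_bdd: "bdd_below (dq x h ` {0<..})"
  by (rule bdd_belowI[where m="- norm h"]) (auto intro: dq_lb)

lemma gd_le: "0 < t \<Longrightarrow> gd x h \<le> dq x h t"
  unfolding gd_def by (rule cInf_lower) (auto intro: dq_bdd)

lemma gd_ge: "(\<And>t. 0 < t \<Longrightarrow> c \<le> dq x h t) \<Longrightarrow> c \<le> gd x h"
  unfolding gd_def by (rule cInf_greatest) auto

lemma gd_abs: "\<bar>gd x h\<bar> \<le> norm h"
proof -
  have "gd x h \<le> dq x h 1" by (rule gd_le) simp
  moreover have "- norm h \<le> gd x h" by (rule gd_ge) (rule dq_lb)
  ultimately show ?thesis using dq_bound[of 1 x h] by auto
qed

lemma gd_self: "gd x x = norm x"
proof -
  have "dq x x t = norm x" if "t > 0" for t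
  proof -
    have "x + t *\<^sub>R x = (1 + t) *\<^sub>R x" by (simp add: algebra_simps)
    then have "norm (x + t *\<^sub>R x) = (1 + t) * norm x" using that by simp
    then show ?thesis unfolding dq_def using that by (simp add: field_simps)
  qed
  then show ?thesis using gd_le[of 1 x x] gd_ge[of "norm x" x x] by simp
qed

lemma gd_zero: "gd x 0 = 0"
  using gd_le[of 1 x 0] gd_ge[of 0 x 0] by (simp add: dq_def)

lemma dq_add: "0 < t \<Longrightarrow> dq x (h1 + h2) t \<le> dq x h1 (2*t) + dq x h2 (2*t)"
proof -
  have key: "\<And>N a b n::real. N \<le> 1/2*a + 1/2*b \<Longrightarrow> N - n \<le> (a-n)/2 + (b-n)/2" by (simp add: field_simps)
  assume t: "0 < t"
  have e1: "(1/2) *\<^sub>R (x + (2*t) *\<^sub>R h1) + (1/2) *\<^sub>R (x + (2*t) *\<^sub>R h2) = ((1/2) *\<^sub>R x + (1/2) *\<^sub>R x) + t *\<^sub>R (h1 + h2)"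
    by (simp add: algebra_simps)
  have e2: "(1/2::real) *\<^sub>R x + (1/2) *\<^sub>R x = x" by (simp flip: scaleR_add_left)
  have eq: "x + t *\<^sub>R (h1 + h2) = (1/2) *\<^sub>R (x + (2*t) *\<^sub>R h1) + (1/2) *\<^sub>R (x + (2*t) *\<^sub>R h2)"
    unfolding e1 e2 ..
  have "norm (x + t *\<^sub>R (h1 + h2)) \<le> (1/2) * norm (x + (2*t) *\<^sub>R h1) + (1/2) * norm (x + (2*t) *\<^sub>R h2)"
    unfolding eq by (rule order_trans[OF norm_triangle_ineq]) simp
  then have "norm (x + t *\<^sub>R (h1 + h2)) - norm x \<le>
     (norm (x + (2*t) *\<^sub>R h1) - norm x)/2 + (norm (x + (2*t) *\<^sub>R h2) - norm x)/2"
    by (rule key)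
  then have "(norm (x + t *\<^sub>R (h1 + h2)) - norm x) / t \<le>
     ((norm (x + (2*t) *\<^sub>R h1) - norm x)/2 + (norm (x + (2*t) *\<^sub>R h2) - norm x)/2) / t"
    by (rule divide_right_mono) (use t in simp)
  also have "\<dots> = (norm (x + (2*t) *\<^sub>R h1) - norm x)/(2*t) + (norm (x + (2*t) *\<^sub>R h2) - norm x)/(2*t)"
    using t by (simp add: field_simps)
  finally show ?thesis unfolding dq_def .
qed

lemma gd_subadd: "gd x (h1 + h2) \<le> gd x h1 + gd x h2"
proof -
  have "gd x (h1 + h2) - dq x h2 t2 \<le> gd x h1" if t2: "t2 > 0" for t2
  proof (rule gd_ge)
    fix t1 :: real assume t1: "t1 > 0"
    define t where "t = min t1 t2 / 2"
    have tp: "t > 0" using t1 t2 by (simp add: t_def)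
    have "gd x (h1 + h2) \<le> dq x (h1 + h2) t" by (rule gd_le[OF tp])
    also have "\<dots> \<le> dq x h1 (2*t) + dq x h2 (2*t)" by (rule dq_add[OF tp])
    also have "\<dots> \<le> dq x h1 t1 + dq x h2 t2"
      using dq_mono[of "2*t" t1 x h1] dq_mono[of "2*t" t2 x h2] tp by (simp add: t_def)
    finally show "gd x (h1 + h2) - dq x h2 t2 \<le> dq x h1 t1" by simp
  qed
  then have "gd x (h1 + h2) - gd x h1 \<le> gd x h2"
    using gd_ge[of "gd x (h1 + h2) - gd x h1" x h2] by force
  then show ?thesis by simp
qed

lemma gd_pos_scale:
  assumes c: "c > 0" shows "gd x (c *\<^sub>R h) = c * gd x h"
proof -
  have dqs: "dq x (c *\<^sub>R h) t = c * dq x h (c * t)" if "t > 0" for t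
    unfolding dq_def using c that by (simp add: field_simps)
  have "gd x (c *\<^sub>R h) / c \<le> gd x h"
  proof (rule gd_ge)
    fix t :: real assume t: "t > 0"
    have "gd x (c *\<^sub>R h) \<le> dq x (c *\<^sub>R h) (t / c)" using t c by (intro gd_le) simp
    also have "\<dots> = c * dq x h t" using dqs[of "t/c"] t c by simp
    finally show "gd x (c *\<^sub>R h) / c \<le> dq x h t" using c by (simp add: field_simps)
  qed
  moreover have "c * gd x h \<le> gd x (c *\<^sub>R h)"
  proof (rule gd_ge)
    fix t :: real assume t: "t > 0"
    have "c * gd x h \<le> c * dq x h (c * t)" using t c by (intro mult_left_mono gd_le) simp_all
    also have "\<dots> = dq x (c *\<^sub>R h) t" using dqs[OF t] by simp
    finally show "c * gd x h \<le> dq x (c *\<^sub>R h) t" .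
  qed
  ultimately show ?thesis using c by (simp add: field_simps)
qed

lemma gd_scale_point:
  assumes c: "c > 0" shows "gd (c *\<^sub>R x) h = gd x h"
proof -
  have dqs: "dq (c *\<^sub>R x) h t = dq x h (t / c)" if "t > 0" for t
  proof -
    have "c *\<^sub>R x + t *\<^sub>R h = c *\<^sub>R (x + (t/c) *\<^sub>R h)" using c by (simp add: algebra_simps)
    then have "norm (c *\<^sub>R x + t *\<^sub>R h) = c * norm (x + (t/c) *\<^sub>R h)" using c by simp
    then show ?thesis unfolding dq_def using c that by (simp add: field_simps)
  qed
  have "gd (c *\<^sub>R x) h \<le> gd x h"
  proof (rule gd_ge)
    fix t :: real assume t: "t > 0"
    have "gd (c *\<^sub>R x) h \<le> dq (c *\<^sub>R x) h (c * t)" using t c by (intro gd_le) simp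
    also have "\<dots> = dq x h t" using dqs[of "c*t"] t c by simp
    finally show "gd (c *\<^sub>R x) h \<le> dq x h t" .
  qed
  moreover have "gd x h \<le> gd (c *\<^sub>R x) h"
  proof (rule gd_ge)
    fix t :: real assume t: "t > 0"
    have "gd x h \<le> dq x h (t / c)" using t c by (intro gd_le) simp
    also have "\<dots> = dq (c *\<^sub>R x) h t" using dqs[OF t] by simp
    finally show "gd x h \<le> dq (c *\<^sub>R x) h t" .
  qed
  ultimately show ?thesis by simp
qed

lemma gd_neg_point: "gd (- x) h = gd x (- h)"
proof -
  have "dq (- x) h = dq x (- h)"
  proof
    fix t
    have "- x + t *\<^sub>R h = - (x + t *\<^sub>R (- h))" by simp
    then have "norm (- x + t *\<^sub>R h) = norm (x + t *\<^sub>R (- h))"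
      by (simp only: norm_minus_cancel)
    then show "dq (- x) h t = dq x (- h) t" unfolding dq_def by simp
  qed
  then show ?thesis unfolding gd_def by simp
qed

lemma gd_odd_ge: "0 \<le> gd x h + gd x (- h)"
proof -
  have "- dq x h t \<le> gd x (- h)" if t: "t > 0" for t
  proof (rule gd_ge)
    fix s :: real assume s: "s > 0"
    define u where "u = min s t"
    have u: "u > 0" using s t by (simp add: u_def)
    have "0 \<le> dq x h u + dq x (- h) u"
    proof -
      have "2 *\<^sub>R x = (x + u *\<^sub>R h) + (x + u *\<^sub>R (- h))" by (simp add: scaleR_2)
      then have "norm (2 *\<^sub>R x) \<le> norm (x + u *\<^sub>R h) + norm (x + u *\<^sub>R (- h))"
        by (simp only: norm_triangle_ineq)
      then have "2 * norm x \<le> norm (x + u *\<^sub>R h) + norm (x + u *\<^sub>R (- h))"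
        by simp
      then have "0 \<le> (norm (x + u *\<^sub>R h) - norm x) + (norm (x + u *\<^sub>R (- h)) - norm x)"
        by linarith
      then have "0 \<le> ((norm (x + u *\<^sub>R h) - norm x) + (norm (x + u *\<^sub>R (- h)) - norm x)) / u"
        using u by simp
      then show ?thesis unfolding dq_def by (simp only: add_divide_distrib)
    qed
    also have "\<dots> \<le> dq x h t + dq x (- h) s"
      using dq_mono[of u t x h] dq_mono[of u s x "- h"] u by (simp add: u_def)
    finally show "- dq x h t \<le> dq x (- h) s" by simp
  qed
  then have "- gd x (- h) \<le> gd x h" using gd_ge[of "- gd x (- h)" x h] by force
  then show ?thesis by simp
qed


lemma gd_odd_le:
  assumes US: "uniformly_smooth (UNIV::'a::real_normed_vector set)" and x: "(x::'a) \<noteq> 0"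
  shows "gd x h + gd x (- h) \<le> 0"
proof (cases "h = 0")
  case True then show ?thesis by (simp add: gd_zero)
next
  case False
  have nh: "norm h > 0" and nx: "norm x > 0" using False x by auto
  have "gd x h + gd x (- h) \<le> 0 + e" if e: "e > 0" for e
  proof -
    define e' where "e' = e / (2 * norm h)"
    have e'p: "e' > 0" using e nh by (simp add: e'_def)
    obtain d where d: "d > 0" and H: "\<And>\<tau> u v. 0 < \<tau> \<Longrightarrow> \<tau> < d \<Longrightarrow> norm (u::'a) = 1 \<Longrightarrow> norm v = 1 \<Longrightarrow>
        (norm (u + \<tau> *\<^sub>R v) + norm (u - \<tau> *\<^sub>R v)) / 2 - 1 \<le> e' * \<tau>"
    proof -
      from US e'p obtain d where d: "d > 0" and H0: "\<forall>t. 0 < t \<and> t < d \<longrightarrow>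
        (\<forall>x y::'a. norm x = 1 \<and> norm y = 1 \<longrightarrow>
        (norm (x + t *\<^sub>R y) + norm (x - t *\<^sub>R y)) / 2 - 1 \<le> e' * t)"
        unfolding uniformly_smooth_def by blast
      show ?thesis using that[OF d] H0 by blast
    qed
    define t where "t = d * norm x / (2 * norm h)"
    define \<tau> where "\<tau> = d / 2"
    have tp: "t > 0" using d nx nh by (simp add: t_def)
    have tau: "0 < \<tau>" "\<tau> < d" using d by (auto simp: \<tau>_def)
    define u where "u = (1 / norm x) *\<^sub>R x"
    define v where "v = (1 / norm h) *\<^sub>R h"
    have nu: "norm u = 1" using nx by (simp add: u_def)
    have nv: "norm v = 1" using nh by (simp add: v_def)
    have xu: "norm x *\<^sub>R u = x" using nx by (simp add: u_def)
    have coef: "norm x * \<tau> * (1 / norm h) = t" using nh by (simp add: t_def \<tau>_def)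
    have tv: "norm x *\<^sub>R (\<tau> *\<^sub>R v) = t *\<^sub>R h"
      by (simp only: v_def scaleR_scaleR mult.assoc[symmetric] coef)
    have e1: "x + t *\<^sub>R h = norm x *\<^sub>R (u + \<tau> *\<^sub>R v)"
      by (simp only: scaleR_right_distrib xu tv)
    have e2': "norm x *\<^sub>R (u - \<tau> *\<^sub>R v) = x - t *\<^sub>R h"
      by (simp only: scaleR_right_diff_distrib xu tv)
    have e2: "x + t *\<^sub>R (- h) = norm x *\<^sub>R (u - \<tau> *\<^sub>R v)"
      unfolding e2' by simp
    have n1: "norm (x + t *\<^sub>R h) = norm x * norm (u + \<tau> *\<^sub>R v)" unfolding e1 by simp
    have n2: "norm (x + t *\<^sub>R (- h)) = norm x * norm (u - \<tau> *\<^sub>R v)" unfolding e2 by simp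
    have Hb: "norm (u + \<tau> *\<^sub>R v) + norm (u - \<tau> *\<^sub>R v) \<le> 2 + 2 * e' * \<tau>"
    proof -
      have key: "\<And>A E::real. A / 2 - 1 \<le> E \<Longrightarrow> A \<le> 2 + 2 * E" by (simp add: field_simps)
      show ?thesis using key[OF H[OF tau nu nv]] by (simp only: mult.assoc)
    qed
    have "norm (x + t *\<^sub>R h) + norm (x + t *\<^sub>R (- h)) \<le> norm x * (2 + 2 * e' * \<tau>)"
      unfolding n1 n2 distrib_left[symmetric] using Hb nx by (intro mult_left_mono) auto
    also have "\<dots> = 2 * norm x + e * t"
      using nh nx by (simp add: e'_def t_def \<tau>_def field_simps)
    finally have "norm (x + t *\<^sub>R h) + norm (x + t *\<^sub>R (- h)) - 2 * norm x \<le> e * t" by simp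
    then have "dq x h t + dq x (- h) t \<le> e"
      unfolding dq_def using tp by (simp add: field_simps diff_divide_distrib[symmetric] add_divide_distrib[symmetric])
    moreover have "gd x h + gd x (- h) \<le> dq x h t + dq x (- h) t"
      using gd_le[OF tp, of x h] gd_le[OF tp, of x "- h"] by simp
    ultimately show ?thesis by simp
  qed
  then show ?thesis by (rule field_le_epsilon)
qed

lemma gd_neg:
  assumes US: "uniformly_smooth (UNIV::'a::real_normed_vector set)" and x: "(x::'a) \<noteq> 0"
  shows "gd x (- h) = - gd x h"
  using gd_odd_le[OF US x, of h] gd_odd_ge[of x h] by simp

lemma gd_bl:
  assumes US: "uniformly_smooth (UNIV::'a::real_normed_vector set)" and x: "(x::'a) \<noteq> 0"
  shows "bounded_linear (gd x)"
proof (rule bounded_linear_intro[where K=1])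
  fix a b :: 'a
  have "gd x (- a + - b) \<le> gd x (- a) + gd x (- b)" by (rule gd_subadd)
  moreover have "- a + - b = - (a + b)" by simp
  ultimately have "- gd x (a + b) \<le> - gd x a - gd x b"
    using gd_neg[OF US x, of "a + b"] gd_neg[OF US x, of a] gd_neg[OF US x, of b] by simp
  moreover have "gd x (a + b) \<le> gd x a + gd x b" by (rule gd_subadd)
  ultimately show "gd x (a + b) = gd x a + gd x b" by simp
next
  fix r :: real and a :: 'a
  show "gd x (r *\<^sub>R a) = r *\<^sub>R gd x a"
  proof (cases "r > 0")
    case True then show ?thesis by (simp add: gd_pos_scale)
  next
    case False
    show ?thesis
    proof (cases "r = 0")
      case True then show ?thesis by (simp add: gd_zero)
    next
      case False
      with \<open>\<not> r > 0\<close> have "- r > 0" by simp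
      have "gd x (r *\<^sub>R a) = gd x (- ((- r) *\<^sub>R a))" by simp
      also have "\<dots> = - gd x ((- r) *\<^sub>R a)" by (rule gd_neg[OF US x])
      also have "\<dots> = r * gd x a" using gd_pos_scale[OF \<open>- r > 0\<close>, of x a] by simp
      finally show ?thesis by simp
    qed
  qed
next
  fix a :: 'a
  show "norm (gd x a) \<le> norm a * 1" using gd_abs[of x a] by simp
qed

definition Dl :: "'a::real_normed_vector \<Rightarrow> 'a \<Rightarrow>\<^sub>L real" where
  "Dl x = Blinfun (gd x)"

lemma Dl_apply:
  assumes US: "uniformly_smooth (UNIV::'a::real_normed_vector set)" and x: "(x::'a) \<noteq> 0"
  shows "blinfun_apply (Dl x) = gd x"
  unfolding Dl_def by (rule bounded_linear_Blinfun_apply[OF gd_bl[OF US x]])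

lemma Dl_norm:
  assumes US: "uniformly_smooth (UNIV::'a::real_normed_vector set)" and x: "(x::'a) \<noteq> 0"
  shows "norm (Dl x) = 1"
proof -
  have "norm (Dl x) \<le> 1"
    by (rule norm_blinfun_bound) (use gd_abs in \<open>auto simp: Dl_apply[OF US x]\<close>)
  moreover have "norm x \<le> norm (Dl x) * norm x"
    using norm_blinfun[of "Dl x" x] by (simp add: Dl_apply[OF US x] gd_self)
  then have "1 \<le> norm (Dl x)" using x by simp
  ultimately show ?thesis by simp
qed

lemma strict_conv:
  assumes UC: "uniformly_convex (UNIV::'a::real_normed_vector set)"
    and u: "norm u = r" and v: "norm (v::'a) = r" and uv: "u \<noteq> v"
  shows "norm ((1/2) *\<^sub>R (u + v)) < r"
proof -
  have r0: "r \<ge> 0" using u by auto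
  have "r \<noteq> 0" using u v uv by auto
  with r0 have r: "r > 0" by simp
  define u' where "u' = (1/r) *\<^sub>R u"
  define v' where "v' = (1/r) *\<^sub>R v"
  have nu: "norm u' = 1" "norm v' = 1" using u v r by (auto simp: u'_def v'_def)
  have ne: "norm (u' - v') > 0" using uv r by (simp add: u'_def v'_def)
  obtain d where d: "d > 0" and H: "\<And>x y::'a. norm x \<le> 1 \<and> norm y \<le> 1 \<and> norm (x - y) \<ge> norm (u' - v')
      \<longrightarrow> norm ((1/2) *\<^sub>R (x + y)) \<le> 1 - d"
  proof -
    from UC ne obtain d where d: "d > 0" and H0: "\<forall>x y::'a. norm x \<le> 1 \<and> norm y \<le> 1 \<and> norm (x - y) \<ge> norm (u' - v')
      \<longrightarrow> norm ((1/2) *\<^sub>R (x + y)) \<le> 1 - d"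
      unfolding uniformly_convex_def by blast
    show ?thesis using that[OF d] H0 by blast
  qed
  have "norm ((1/2) *\<^sub>R (u' + v')) \<le> 1 - d" using H[of u' v'] nu by simp
  moreover have "(1/2) *\<^sub>R (u + v) = r *\<^sub>R ((1/2) *\<^sub>R (u' + v'))"
    using r by (simp add: u'_def v'_def algebra_simps)
  then have "norm ((1/2) *\<^sub>R (u + v)) = r * norm ((1/2) *\<^sub>R (u' + v'))" using r by simp
  ultimately have "norm ((1/2) *\<^sub>R (u + v)) \<le> r * (1 - d)"
    using r by (simp add: mult_left_mono)
  also have "\<dots> < r" using r d by simp
  finally show ?thesis .
qed

lemma gd_unique:
  assumes UC: "uniformly_convex (UNIV::'a::real_normed_vector set)"
    and US: "uniformly_smooth (UNIV::'a set)"
    and x: "(x::'a) \<noteq> 0" and y: "y \<noteq> 0" and eq: "gd x = gd y"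
  shows "(1 / norm x) *\<^sub>R x = (1 / norm y) *\<^sub>R y"
proof (rule ccontr)
  define u where "u = (1 / norm x) *\<^sub>R x"
  define v where "v = (1 / norm y) *\<^sub>R y"
  assume "(1 / norm x) *\<^sub>R x \<noteq> (1 / norm y) *\<^sub>R y"
  then have uv: "u \<noteq> v" by (simp add: u_def v_def)
  have nu: "norm u = 1" "norm v = 1" using x y by (auto simp: u_def v_def)
  have u0: "u \<noteq> 0" using nu by auto
  have px: "1 / norm x > 0" using x by simp
  have py: "1 / norm y > 0" using y by simp
  have gu: "gd u = gd x" unfolding u_def by (rule ext, rule gd_scale_point[OF px])
  have gv: "gd v = gd y" unfolding v_def by (rule ext, rule gd_scale_point[OF py])
  have guv: "gd u = gd v" using gu gv eq by simp
  have bl: "bounded_linear (gd u)" by (rule gd_bl[OF US u0])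
  have au: "blinfun_apply (Dl u) = gd u" by (rule Dl_apply[OF US u0])
  have "gd u ((1/2) *\<^sub>R (u + v)) = (1/2) * (gd u u + gd u v)"
    unfolding au[symmetric] by (simp add: blinfun.add_right blinfun.scaleR_right)
  also have "\<dots> = 1" using guv gd_self[of u] gd_self[of v] nu by simp
  finally have "1 \<le> norm ((1/2) *\<^sub>R (u + v))"
    using gd_abs[of u "(1/2) *\<^sub>R (u + v)"] by simp
  moreover have "norm ((1/2) *\<^sub>R (u + v)) < 1" by (rule strict_conv[OF UC nu uv])
  ultimately show False by simp
qed

lemma polar_iff:
  assumes UC: "uniformly_convex (UNIV::'a::real_normed_vector set)"
    and cK: "cone K" and K0: "0 \<in> K"
  shows "(z::'a) \<in> polar_cone K \<longleftrightarrow> (\<forall>k\<in>K. norm z \<le> norm (z - k))"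
proof
  assume "z \<in> polar_cone K"
  then have "0 \<in> metric_proj K z" unfolding polar_cone_def by simp
  then show "\<forall>k\<in>K. norm z \<le> norm (z - k)" unfolding metric_proj_def by simp
next
  assume A: "\<forall>k\<in>K. norm z \<le> norm (z - k)"
  have sub: "metric_proj K z \<subseteq> {0}"
  proof
    fix k assume k: "k \<in> metric_proj K z"
    then have kK: "k \<in> K" and le: "norm (z - k) \<le> norm z"
      using K0 unfolding metric_proj_def by force+
    show "k \<in> {0}"
    proof (rule ccontr)
      assume "k \<notin> {0}" then have k0: "k \<noteq> 0" by simp
      have eqn: "norm (z - k) = norm z" using A kK le by force
      have "(1/2) *\<^sub>R k \<in> K" using cK kK by (simp add: mem_cone)
      then have n1: "norm z \<le> norm (z - (1/2) *\<^sub>R k)" using A by blast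
      have h1: "(1/2) *\<^sub>R (z + (z - k)) = ((1/2) *\<^sub>R z + (1/2) *\<^sub>R z) - (1/2) *\<^sub>R k"
        by (simp add: algebra_simps)
      have h2: "(1/2::real) *\<^sub>R z + (1/2) *\<^sub>R z = z" by (simp flip: scaleR_add_left)
      have zk: "z \<noteq> z - k" using k0 by simp
      have "norm ((1/2) *\<^sub>R (z + (z - k))) < norm z"
        by (rule strict_conv[OF UC refl eqn zk])
      then have "norm (z - (1/2) *\<^sub>R k) < norm z" unfolding h1 h2 .
      with n1 show False by simp
    qed
  qed
  moreover have "0 \<in> metric_proj K z" using K0 A unfolding metric_proj_def by simp
  ultimately show "z \<in> polar_cone K" unfolding polar_cone_def by blast
qed

lemma polar_gd:
  assumes US: "uniformly_smooth (UNIV::'a::real_normed_vector set)"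
    and cK: "cone K" and z: "(z::'a) \<noteq> 0" and A: "\<forall>k\<in>K. norm z \<le> norm (z - k)" and k: "k \<in> K"
  shows "gd z k \<le> 0"
proof -
  have "0 \<le> gd z (- k)"
  proof (rule gd_ge)
    fix t :: real assume t: "0 < t"
    have "t *\<^sub>R k \<in> K" using cK k t by (simp add: mem_cone)
    then have "norm z \<le> norm (z - t *\<^sub>R k)" using A by blast
    moreover have "z + t *\<^sub>R (- k) = z - t *\<^sub>R k" by simp
    ultimately show "0 \<le> dq z (- k) t" unfolding dq_def using t by simp
  qed
  then show ?thesis using gd_neg[OF US z, of k] by simp
qed

lemma gd_polar:
  assumes US: "uniformly_smooth (UNIV::'a::real_normed_vector set)"
    and z: "(z::'a) \<noteq> 0" and A: "\<forall>k\<in>K. gd z k \<le> 0" and k: "k \<in> K"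
  shows "norm z \<le> norm (z - k)"
proof -
  have "0 \<le> gd z (- k)" using gd_neg[OF US z, of k] A k by simp
  also have "\<dots> \<le> dq z (- k) 1" by (rule gd_le) simp
  also have "\<dots> = norm (z - k) - norm z" by (simp add: dq_def)
  finally show ?thesis by simp
qed

lemma polar_char:
  assumes UC: "uniformly_convex (UNIV::'a::real_normed_vector set)"
    and US: "uniformly_smooth (UNIV::'a set)"
    and cK: "cone K" and K0: "0 \<in> K" and z: "(z::'a) \<noteq> 0"
  shows "z \<in> polar_cone K \<longleftrightarrow> (\<forall>k\<in>K. gd z k \<le> 0)"
  using polar_iff[OF UC cK K0, of z] polar_gd[OF US cK z] gd_polar[OF US z, of K] by blast

lemma wedge_cone: "cone (wedge a b)"
  unfolding cone_def wedge_def by (auto simp: blinfun.scaleR_right mult_nonneg_nonpos)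

lemma wedge_convex: "convex (wedge a b)"
  unfolding convex_def wedge_def
  by (auto simp: blinfun.add_right blinfun.scaleR_right mult_nonneg_nonpos intro!: add_nonpos_nonpos)

lemma wedge_0: "0 \<in> wedge a b"
  unfolding wedge_def by (simp add: blinfun.zero_right)

lemma wedge_closed: "closed (wedge a b)"
proof -
  have "wedge a b = (\<Inter>c\<in>dual_dir a b. {x. blinfun_apply c x \<le> 0})"
    unfolding wedge_def by auto
  moreover have "closed {x. blinfun_apply c x \<le> 0}" for c :: "'a \<Rightarrow>\<^sub>L real"
    by (intro closed_Collect_le continuous_intros)
  ultimately show ?thesis by (simp add: closed_INT)
qed

lemma wedge_sub1:
  assumes "norm a = 1" and "k \<in> wedge a b" shows "blinfun_apply a k \<le> 0"
proof -
  have "a \<in> dual_dir a b" unfolding dual_dir_def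
    by (rule CollectI, rule exI[of _ 1], rule exI[of _ 0]) (use assms in simp)
  then show ?thesis using assms unfolding wedge_def by blast
qed

lemma wedge_sub2:
  assumes "norm b = 1" and "k \<in> wedge a b" shows "blinfun_apply b k \<le> 0"
proof -
  have "b \<in> dual_dir a b" unfolding dual_dir_def
    by (rule CollectI, rule exI[of _ 0], rule exI[of _ 1]) (use assms in simp)
  then show ?thesis using assms unfolding wedge_def by blast
qed

lemma in_wedge:
  assumes "blinfun_apply a k \<le> 0" "blinfun_apply b k \<le> 0" shows "k \<in> wedge a b"
  unfolding wedge_def dual_dir_def using assms
proof (clarsimp simp: blinfun.add_left blinfun.scaleR_left)
  fix l m :: real assume "0 \<le> l" "0 \<le> m"
  then have "l * blinfun_apply a k + m * blinfun_apply b k \<le> 0"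
    using assms by (simp add: add_nonpos_nonpos mult_nonneg_nonpos)
  then show "(l * blinfun_apply a k + m * blinfun_apply b k) / norm (l *\<^sub>R a + m *\<^sub>R b) \<le> 0"
    by (simp add: divide_nonpos_nonneg)
qed

theorem mainTheorem7:
  assumes "uniformly_convex (UNIV :: 'a::banach set)"
    and "uniformly_smooth (UNIV :: 'a set)"
  shows "(\<forall>K::'a set. closed K \<and> convex K \<and> cone K \<and> K \<noteq> {} \<longrightarrow> convex (polar_cone K))
     \<longleftrightarrow> (\<forall>a b :: 'a \<Rightarrow>\<^sub>L real. norm a = 1 \<and> norm b = 1 \<and> b \<noteq> a \<and> b \<noteq> - a
            \<longrightarrow> convex (polar_cone (wedge a b)))"
proof
  assume A: "\<forall>K::'a set. closed K \<and> convex K \<and> cone K \<and> K \<noteq> {} \<longrightarrow> convex (polar_cone K)"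
  show "\<forall>a b :: 'a \<Rightarrow>\<^sub>L real. norm a = 1 \<and> norm b = 1 \<and> b \<noteq> a \<and> b \<noteq> - a
            \<longrightarrow> convex (polar_cone (wedge a b))"
  proof (intro allI impI)
    fix a b :: "'a \<Rightarrow>\<^sub>L real"
    have "closed (wedge a b)" "convex (wedge a b)" "cone (wedge a b)" "wedge a b \<noteq> {}"
      using wedge_closed[of a b] wedge_convex[of a b] wedge_cone[of a b] wedge_0[of a b] by auto
    then show "convex (polar_cone (wedge a b))" using A by blast
  qed
next
  note UC = assms(1) and US = assms(2)
  assume B: "\<forall>a b :: 'a \<Rightarrow>\<^sub>L real. norm a = 1 \<and> norm b = 1 \<and> b \<noteq> a \<and> b \<noteq> - a
            \<longrightarrow> convex (polar_cone (wedge a b))"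
  show "\<forall>K::'a set. closed K \<and> convex K \<and> cone K \<and> K \<noteq> {} \<longrightarrow> convex (polar_cone K)"
  proof (intro allI impI)
    fix K :: "'a set" assume HK: "closed K \<and> convex K \<and> cone K \<and> K \<noteq> {}"
    then have cK: "cone K" by simp
    have K0: "0 \<in> K" using HK cone_contains_0 by blast
    show "convex (polar_cone K)"
    proof (rule convexI)
      fix x y :: 'a and u v :: real
      assume xP: "x \<in> polar_cone K" and yP: "y \<in> polar_cone K"
        and u: "0 \<le> u" and v: "0 \<le> v" and uv: "u + v = 1"
      define z where "z = u *\<^sub>R x + v *\<^sub>R y"
      have Px: "\<forall>k\<in>K. norm x \<le> norm (x - k)" using polar_iff[OF UC cK K0] xP by blast
      have Py: "\<forall>k\<in>K. norm y \<le> norm (y - k)" using polar_iff[OF UC cK K0] yP by blast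
      have gx: "\<forall>k\<in>K. gd x k \<le> 0" if "x \<noteq> 0" using polar_gd[OF US cK that Px] by blast
      have gy: "\<forall>k\<in>K. gd y k \<le> 0" if "y \<noteq> 0" using polar_gd[OF US cK that Py] by blast
      have main: "\<forall>k\<in>K. gd z k \<le> 0" if z0: "z \<noteq> 0"
      proof (cases "x = 0")
        case True
        then have zy: "z = v *\<^sub>R y" by (simp add: z_def)
        then have "v \<noteq> 0" "y \<noteq> 0" using z0 by auto
        then have "v > 0" using v by simp
        then have "gd z = gd y" unfolding zy by (simp add: fun_eq_iff gd_scale_point)
        then show ?thesis using gy \<open>y \<noteq> 0\<close> by simp
      next
        case x0: False
        show ?thesis
        proof (cases "y = 0")
          case True
          then have zx: "z = u *\<^sub>R x" by (simp add: z_def)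
          then have "u \<noteq> 0" using z0 by auto
          then have "u > 0" using u by simp
          then have "gd z = gd x" unfolding zx by (simp add: fun_eq_iff gd_scale_point)
          then show ?thesis using gx x0 by simp
        next
          case y0: False
          have gxK: "\<forall>k\<in>K. gd x k \<le> 0" using gx x0 by simp
          have gyK: "\<forall>k\<in>K. gd y k \<le> 0" using gy y0 by simp
          define w where "w = (1 / norm x) *\<^sub>R x"
          have xw: "x = norm x *\<^sub>R w" using x0 by (simp add: w_def)
          have ix: "1 / norm x > 0" using x0 by simp
          have gw: "gd w = gd x" unfolding w_def using ix by (simp add: fun_eq_iff gd_scale_point)
          show ?thesis
          proof (cases "gd y = gd x")
            case True
            have w2: "w = (1 / norm y) *\<^sub>R y"
              unfolding w_def by (rule gd_unique[OF UC US x0 y0 True[symmetric]])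
            have yw: "y = norm y *\<^sub>R w" using y0 by (simp add: w2)
            define c where "c = u * norm x + v * norm y"
            have zc: "z = c *\<^sub>R w" unfolding z_def c_def
              by (subst xw, subst yw) (simp add: algebra_simps)
            have "c \<ge> 0" using u v by (simp add: c_def)
            moreover have "c \<noteq> 0" using z0 zc by auto
            ultimately have "c > 0" by simp
            then have "gd z = gd x" unfolding zc using gw by (simp add: fun_eq_iff gd_scale_point)
            then show ?thesis using gxK by simp
          next
            case neq1: False
            show ?thesis
            proof (cases "gd y = (\<lambda>h. - gd x h)")
              case True
              have my0: "- y \<noteq> 0" using y0 by simp
              have "gd (- y) = gd x"
              proof
                fix h
                have "gd (- y) h = gd y (- h)" by (rule gd_neg_point)
                also have "\<dots> = - gd x (- h)" using True by simp
                also have "\<dots> = gd x h" using gd_neg[OF US x0, of h] by simp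
                finally show "gd (- y) h = gd x h" .
              qed
              then have w2: "w = (1 / norm y) *\<^sub>R (- y)"
                unfolding w_def using gd_unique[OF UC US x0 my0] by simp
              have yw: "y = - (norm y *\<^sub>R w)" using y0 by (simp add: w2)
              define c where "c = u * norm x - v * norm y"
              have zc: "z = c *\<^sub>R w" unfolding z_def c_def
                by (subst xw, subst yw) (simp add: algebra_simps)
              have "c \<noteq> 0" using z0 zc by auto
              show ?thesis
              proof (cases "c > 0")
                case True
                then have "gd z = gd x" unfolding zc using gw by (simp add: fun_eq_iff gd_scale_point)
                then show ?thesis using gxK by simp
              next
                case False
                with \<open>c \<noteq> 0\<close> have nc: "- c > 0" by simp
                have zc2: "z = ((- c) / norm y) *\<^sub>R y" using zc w2 by simp
                have pc: "(- c) / norm y > 0" using nc y0 by (simp add: divide_neg_pos)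
                have "gd z = gd y" unfolding zc2 by (rule ext, rule gd_scale_point[OF pc])
                then show ?thesis using gyK by simp
              qed
            next
              case neq2: False
              have ax: "blinfun_apply (Dl x) = gd x" by (rule Dl_apply[OF US x0])
              have ay: "blinfun_apply (Dl y) = gd y" by (rule Dl_apply[OF US y0])
              have n1: "norm (Dl x) = 1" by (rule Dl_norm[OF US x0])
              have n2: "norm (Dl y) = 1" by (rule Dl_norm[OF US y0])
              have d1: "Dl y \<noteq> Dl x" using neq1 ax ay by metis
              have d2: "Dl y \<noteq> - Dl x"
              proof
                assume "Dl y = - Dl x"
                then have "blinfun_apply (Dl y) = blinfun_apply (- Dl x)" by simp
                then have "gd y = (\<lambda>h. - gd x h)" using ax ay by (simp add: fun_eq_iff uminus_blinfun.rep_eq)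
                with neq2 show False by simp
              qed
              define W where "W = wedge (Dl x) (Dl y)"
              have cvx: "convex (polar_cone W)" using B n1 n2 d1 d2 unfolding W_def by blast
              have cW: "cone W" unfolding W_def by (rule wedge_cone)
              have W0: "0 \<in> W" unfolding W_def by (rule wedge_0)
              have xW: "x \<in> polar_cone W"
                using polar_char[OF UC US cW W0 x0] wedge_sub1[OF n1] ax unfolding W_def by simp
              have yW: "y \<in> polar_cone W"
                using polar_char[OF UC US cW W0 y0] wedge_sub2[OF n2] ay unfolding W_def by simp
              have "z \<in> polar_cone W" unfolding z_def by (rule convexD[OF cvx xW yW u v uv])
              then have gzW: "\<forall>k\<in>W. gd z k \<le> 0" using polar_char[OF UC US cW W0 z0] by simp
              show ?thesis
              proof
                fix k assume "k \<in> K"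
                then have "k \<in> W" unfolding W_def using gxK gyK ax ay by (intro in_wedge) auto
                then show "gd z k \<le> 0" using gzW by simp
              qed
            qed
          qed
        qed
      qed
      show "u *\<^sub>R x + v *\<^sub>R y \<in> polar_cone K"
      proof (cases "z = 0")
        case True
        then show ?thesis using polar_iff[OF UC cK K0] unfolding z_def by simp
      next
        case False
        then show ?thesis using polar_char[OF UC US cK K0 False] main unfolding z_def by simp
      qed
    qed
  qed
qed

end
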